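(* Let $S=\{\pi_1,\pi_2,\pi_3\}$ be a linearly dependent set of three non-trivial permutations with $|\pi_1|\ge|\pi_2|\ge|\pi_3|$. If $|\pi_1|>3$, then $|\pi_2|=|\pi_3|=2$.
   Context: A $k$-permutation is a bijection of $[k]=\{1,\dots,k\}$; $|\pi|$ denotes its order, and a permutation is non-trivial if its order is at least two. The gradient polynomial of a $k$-permutation $\pi$ is $P_\pi(\alpha,\beta)=k!\sum_{m\in[k]}\left(\frac{k-m}{1-\alpha}-\frac{m-1}{\alpha}\right)\left(\frac{k-\pi(m)}{1-\beta}-\frac{\pi(m)-1}{\beta}\right)\frac{\alpha^{m-1}(1-\alpha)^{k-m}\beta^{\pi(m)-1}(1-\beta)^{k-\pi(m)}}{(m-1)!(k-m)!(\pi(m)-1)!(k-\pi(m))!}$. A set $S$ of (distinct) permutations is linearly dependent if the gradient polynomials $P_\pi$, $\pi\in S$, are linearly dependent over $\mathbb{R}$. *)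

theory Defs
  imports Complex_Main
begin

text \<open>A k-permutation is represented in one-line notation as a list
  [pi(1), ..., pi(k)] which is a bijection of {1..k}.  Its order |pi| is k,
  the length of the list; pi(m) is the (m-1)-th list entry.\<close>

definition is_perm :: "nat list \<Rightarrow> bool" where
  "is_perm p \<longleftrightarrow> distinct p \<and> set p = {1..length p}"

definition perm_order :: "nat list \<Rightarrow> nat" where
  "perm_order p = length p"

definition perm_app :: "nat list \<Rightarrow> nat \<Rightarrow> nat" where
  "perm_app p m = p ! (m - 1)"

definition nontrivial_perm :: "nat list \<Rightarrow> bool" where
  "nontrivial_perm p \<longleftrightarrow> is_perm p \<and> perm_order p \<ge> 2"

definition grad_poly :: "nat list \<Rightarrow> real \<Rightarrow> real \<Rightarrow> real" where
  "grad_poly p \<alpha> \<beta> =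
     (let k = perm_order p in
      fact k * (\<Sum>m\<in>{1..k}.
        ((real k - real m) / (1 - \<alpha>) - (real m - 1) / \<alpha>) *
        ((real k - real (perm_app p m)) / (1 - \<beta>) - (real (perm_app p m) - 1) / \<beta>) *
        (\<alpha> ^ (m - 1) * (1 - \<alpha>) ^ (k - m) * \<beta> ^ (perm_app p m - 1) * (1 - \<beta>) ^ (k - perm_app p m)) /
        (fact (m - 1) * fact (k - m) * fact (perm_app p m - 1) * fact (k - perm_app p m))))"

text \<open>Two polynomials coincide iff they agree
  on the open square (0,1)^2, where the displayed rational expression is defined;
  so we test the linear relation there.\<close>

definition lin_dependent_perms :: "nat list set \<Rightarrow> bool" where
  "lin_dependent_perms S \<longleftrightarrow>
     (\<exists>c :: nat list \<Rightarrow> real. (\<exists>p\<in>S. c p \<noteq> 0) \<and>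
        (\<forall>\<alpha> \<beta>. 0 < \<alpha> \<and> \<alpha> < 1 \<and> 0 < \<beta> \<and> \<beta> < 1 \<longrightarrow>
           (\<Sum>p\<in>S. c p * grad_poly p \<alpha> \<beta>) = 0))"

end

theory Submission
  imports Defs "HOL-Analysis.Analysis"
begin

definition phi :: "nat \<Rightarrow> nat \<Rightarrow> real \<Rightarrow> real" where
  "phi k m x = x^(m-1) * (1-x)^(k-m) / (fact (m-1) * fact (k-m))"

definition dphi :: "nat \<Rightarrow> nat \<Rightarrow> real \<Rightarrow> real" where
  "dphi k m x = ((real m - 1)/x - (real k - real m)/(1-x)) * phi k m x"

lemma sum_1k: "k \<ge> 1 \<Longrightarrow> (\<Sum>m\<in>{1..k}. f m) = (\<Sum>j\<le>k-1. f (Suc j))"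
proof -
  assume "k \<ge> 1"
  then have "{1..k} = {Suc 0..Suc (k-1)}" by simp
  then show ?thesis by (simp only: sum.atLeast_Suc_atMost_Suc_shift atLeast0AtMost o_def)
qed

lemma PU: assumes "k \<ge> 1" shows "(\<Sum>m\<in>{1..k}. phi k m x) = 1 / fact (k-1)"
proof -
  have "(\<Sum>m\<in>{1..k}. phi k m x) = (\<Sum>j\<le>k-1. phi k (Suc j) x)"
    using assms by (rule sum_1k)
  also have "\<dots> = (\<Sum>j\<le>k-1. of_nat ((k-1) choose j) * x^j * (1-x)^(k-1-j)) / fact (k-1)"
    unfolding sum_divide_distrib
  proof (rule sum.cong[OF refl])
    fix j assume "j \<in> {..k-1}"
    then have j: "j \<le> k-1" by simp
    have "k - Suc j = k - 1 - j" by simp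
    then show "phi k (Suc j) x = of_nat ((k-1) choose j) * x^j * (1-x)^(k-1-j) / fact (k-1)"
      unfolding phi_def using j by (simp add: binomial_fact field_simps)
  qed
  also have "\<dots> = (x + (1-x))^(k-1) / fact (k-1)"
    by (subst binomial_ring) simp
  finally show ?thesis by simp
qed

lemma perm_app_in: assumes "is_perm p" "m \<in> {1..length p}"
  shows "perm_app p m \<in> {1..length p}"
proof -
  have "p ! (m-1) \<in> set p" using assms(2) by auto
  then show ?thesis using assms(1) unfolding is_perm_def perm_app_def by simp
qed

lemma perm_app_inj: assumes "is_perm p" shows "inj_on (perm_app p) {1..length p}"
proof (rule inj_onI)
  fix a b assume a: "a \<in> {1..length p}" and b: "b \<in> {1..length p}" and e: "perm_app p a = perm_app p b"
  have "distinct p" using assms unfolding is_perm_def by simp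
  have "a - 1 < length p" "b - 1 < length p" using a b by auto
  then have "a - 1 = b - 1" using e nth_eq_iff_index_eq[OF \<open>distinct p\<close>] unfolding perm_app_def
    by blast
  then show "a = b" using a b by (simp only: atLeastAtMost_iff) arith
qed

lemma perm_app_bij: assumes "is_perm p" shows "bij_betw (perm_app p) {1..length p} {1..length p}"
proof -
  have "perm_app p ` {1..length p} \<subseteq> {1..length p}" using perm_app_in[OF assms] by auto
  moreover have "card (perm_app p ` {1..length p}) = card {1..length p}"
    using card_image[OF perm_app_inj[OF assms]] .
  ultimately have "perm_app p ` {1..length p} = {1..length p}"
    by (simp add: card_subset_eq)
  then show ?thesis using perm_app_inj[OF assms] by (simp add: bij_betw_def)
qed

lemma perm_reindex: assumes "is_perm p"
  shows "(\<Sum>m\<in>{1..length p}. f (perm_app p m)) = (\<Sum>n\<in>{1..length p}. f n)"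
  using sum.reindex_bij_betw[OF perm_app_bij[OF assms], of f] by simp

lemma pow_pred: "(x::real) \<noteq> 0 \<Longrightarrow> real n * x^(n-1) = real n * x^n / x"
  by (cases n) auto

lemma phi_deriv:
  assumes "1 \<le> m" "m \<le> k" "0 < x" "x < 1"
  shows "(phi k m has_real_derivative dphi k m x) (at x)"
proof -
  have d: "((\<lambda>x. x^(m-1) * (1-x)^(k-m)) has_real_derivative
      (real (m-1) * x^(m-1-1) * (1-x)^(k-m) + x^(m-1) * (real (k-m) * (1-x)^(k-m-1) * (-1)))) (at x)"
    by (auto intro!: derivative_eq_intros)
  have e1: "real (m-1) * x^(m-1-1) = (real m - 1) / x * x^(m-1)"
    using assms pow_pred[of x "m-1"] by (simp add: of_nat_diff)
  have e2: "real (k-m) * (1-x)^(k-m-1) = (real k - real m) / (1-x) * (1-x)^(k-m)"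
    using assms pow_pred[of "1-x" "k-m"] by (simp add: of_nat_diff)
  have "real (m-1) * x^(m-1-1) * (1-x)^(k-m) + x^(m-1) * (real (k-m) * (1-x)^(k-m-1) * (-1))
       = ((real m - 1)/x - (real k - real m)/(1-x)) * (x^(m-1) * (1-x)^(k-m))"
    unfolding e1 mult.assoc[symmetric] e2 using assms by (simp add: field_simps)
  with d have "((\<lambda>x. x^(m-1) * (1-x)^(k-m)) has_real_derivative
      ((real m - 1)/x - (real k - real m)/(1-x)) * (x^(m-1) * (1-x)^(k-m))) (at x)" by simp
  from DERIV_cdivide[OF this, of "fact (m-1) * fact (k-m)"] show ?thesis
    unfolding phi_def[abs_def] dphi_def by (simp add: phi_def)
qed

definition F :: "nat list \<Rightarrow> real \<Rightarrow> real \<Rightarrow> real" where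
  "F p x y = fact (length p) *
     (\<Sum>m\<in>{1..length p}. phi (length p) m x * phi (length p) (perm_app p m) y)"

definition Fx :: "nat list \<Rightarrow> real \<Rightarrow> real \<Rightarrow> real" where
  "Fx p x y = fact (length p) *
     (\<Sum>m\<in>{1..length p}. dphi (length p) m x * phi (length p) (perm_app p m) y)"

definition HS :: "nat list set \<Rightarrow> (nat list \<Rightarrow> real) \<Rightarrow> real \<Rightarrow> real \<Rightarrow> real" where
  "HS S c x y = (\<Sum>p\<in>S. c p * F p x y)"

lemma term_eq:
  fixes a b p q r s f1 f2 f3 f4 :: real
  shows "(-a) * (-b) * (p * q * r * s) / (f1 * f2 * f3 * f4) = (a * (p * q / (f1 * f2))) * (b * (r * s / (f3 * f4)))"
proof -
  have h1: "(p * q / (f1 * f2)) * (r * s / (f3 * f4)) = (p * q * r * s) / (f1 * f2 * f3 * f4)"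
    by (simp only: times_divide_times_eq mult.assoc)
  have "(-a) * (-b) * (p * q * r * s) / (f1 * f2 * f3 * f4) = a * b * ((p * q * r * s) / (f1 * f2 * f3 * f4))"
    by simp
  also have "\<dots> = a * b * ((p * q / (f1 * f2)) * (r * s / (f3 * f4)))" by (simp only: h1)
  also have "\<dots> = (a * (p * q / (f1 * f2))) * (b * (r * s / (f3 * f4)))" by (simp only: mult_ac)
  finally show ?thesis .
qed

lemma grad_eq: "grad_poly p x y = fact (length p) *
     (\<Sum>m\<in>{1..length p}. dphi (length p) m x * dphi (length p) (perm_app p m) y)"
  unfolding grad_poly_def perm_order_def Let_def
proof (rule arg_cong[where f="\<lambda>u. fact (length p) * u"], rule sum.cong[OF refl])
  fix m
  let ?k = "length p" and ?n = "perm_app p m"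
  have e1: "(real ?k - real m) / (1 - x) - (real m - 1) / x = - ((real m - 1)/x - (real ?k - real m)/(1-x))" by simp
  have e2: "(real ?k - real ?n) / (1 - y) - (real ?n - 1) / y = - ((real ?n - 1)/y - (real ?k - real ?n)/(1-y))" by simp
  show "((real ?k - real m) / (1 - x) - (real m - 1) / x) *
        ((real ?k - real ?n) / (1 - y) - (real ?n - 1) / y) *
        (x ^ (m - 1) * (1 - x) ^ (?k - m) * y ^ (?n - 1) * (1 - y) ^ (?k - ?n)) /
        (fact (m - 1) * fact (?k - m) * fact (?n - 1) * fact (?k - ?n)) =
        dphi ?k m x * dphi ?k ?n y"
    unfolding e1 e2 term_eq dphi_def phi_def ..
qed

lemma F_dx: assumes "0 < x" "x < 1"
  shows "((\<lambda>x. F p x y) has_real_derivative Fx p x y) (at x)"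
  unfolding F_def Fx_def
  by (intro DERIV_sum DERIV_cmult DERIV_cmult_right phi_deriv assms) auto

lemma Fx_dy: assumes "is_perm p" "0 < y" "y < 1"
  shows "((\<lambda>y. Fx p x y) has_real_derivative grad_poly p x y) (at y)"
  unfolding Fx_def grad_eq
  by (intro DERIV_sum DERIV_cmult phi_deriv assms)
     (use perm_app_in[OF assms(1)] in auto)

lemma const01:
  assumes d: "\<And>x. 0 < x \<Longrightarrow> x < 1 \<Longrightarrow> (f has_real_derivative 0) (at x)"
    and ab: "0 < a" "a < 1" "0 < b" "b < 1"
  shows "f a = f b"
proof -
  have *: "f v = f u" if uv: "0 < u" "u < v" "v < 1" for u v
  proof -
    have "\<forall>x\<in>{u..v}. isCont f x"
    proof
      fix x assume "x \<in> {u..v}"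
      then have "0 < x" "x < 1" using uv by auto
      then show "isCont f x" using d DERIV_isCont by blast
    qed
    then have c: "continuous_on {u..v} f" by (rule continuous_at_imp_continuous_on)
    have dd: "\<And>x. u < x \<Longrightarrow> x < v \<Longrightarrow> (f has_real_derivative 0) (at x)"
      using d uv by simp
    show ?thesis using DERIV_isconst2[of u v f v, OF uv(2) c dd] uv by simp
  qed
  consider "a < b" | "a = b" | "b < a" by linarith
  then show ?thesis
  proof cases
    case 1 then show ?thesis using *[of a b] ab by simp
  next
    case 2 then show ?thesis by simp
  next
    case 3 then show ?thesis using *[of b a] ab by simp
  qed
qed

lemma mixed_zero:
  assumes fin: "finite S" and perms: "\<forall>p\<in>S. is_perm p"
    and D: "\<And>x y. 0 < x \<Longrightarrow> x < 1 \<Longrightarrow> 0 < y \<Longrightarrow> y < 1 \<Longrightarrow> (\<Sum>p\<in>S. c p * grad_poly p x y) = 0"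
    and xy: "0 < x" "x < 1" "0 < y" "y < 1"
  shows "HS S c x y = HS S c x (1/2) + HS S c (1/2) y - HS S c (1/2) (1/2)"
proof -
  define Hx where "Hx x y = (\<Sum>p\<in>S. c p * Fx p x y)" for x y
  have dHx: "((\<lambda>y. Hx u y) has_real_derivative 0) (at v)" if "0 < u" "u < 1" "0 < v" "v < 1" for u v
  proof -
    have "((\<lambda>y. Hx u y) has_real_derivative (\<Sum>p\<in>S. c p * grad_poly p u v)) (at v)"
      unfolding Hx_def
    proof (rule DERIV_sum)
      fix p assume "p \<in> S"
      then have "is_perm p" using perms by blast
      then show "((\<lambda>y. c p * Fx p u y) has_real_derivative c p * grad_poly p u v) (at v)"
        using that by (intro DERIV_cmult Fx_dy) auto
    qed
    then show ?thesis using D[OF that] by simp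
  qed
  have Hxc: "Hx u v = Hx u (1/2)" if "0 < u" "u < 1" "0 < v" "v < 1" for u v
  proof (rule const01[of "\<lambda>y. Hx u y" v "1/2"])
    fix w :: real assume "0 < w" "w < 1"
    then show "((\<lambda>y. Hx u y) has_real_derivative 0) (at w)" using dHx that by blast
  qed (use that in auto)
  have dH: "((\<lambda>x. HS S c x w) has_real_derivative Hx u w) (at u)" if "0 < u" "u < 1" for u w
    unfolding HS_def Hx_def
  proof (rule DERIV_sum)
    fix p assume "p \<in> S"
    show "((\<lambda>x. c p * F p x w) has_real_derivative c p * Fx p u w) (at u)"
      using that by (intro DERIV_cmult F_dx) auto
  qed
  have g: "((\<lambda>x. HS S c x y - HS S c x (1/2)) has_real_derivative 0) (at u)" if "0 < u" "u < 1" for u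
  proof -
    have "((\<lambda>x. HS S c x y - HS S c x (1/2)) has_real_derivative Hx u y - Hx u (1/2)) (at u)"
      by (rule DERIV_diff; rule dH[OF that])
    moreover have "Hx u y = Hx u (1/2)" using Hxc[of u y] that xy by simp
    ultimately show ?thesis by simp
  qed
  have "(\<lambda>x. HS S c x y - HS S c x (1/2)) x = (\<lambda>x. HS S c x y - HS S c x (1/2)) (1/2)"
    by (rule const01[of "\<lambda>x. HS S c x y - HS S c x (1/2)" x "1/2"]) (use g xy in auto)
  then have "HS S c x y - HS S c x (1/2) = HS S c (1/2) y - HS S c (1/2) (1/2)" by simp
  then show ?thesis by simp
qed

lemma spike01:
  assumes "(f has_integral y) {0..1::real}" "\<And>t. 0 < t \<Longrightarrow> t < 1 \<Longrightarrow> g t = f t"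
  shows "(g has_integral y) {0..1}"
  using has_integral_spike_interior[of f y 0 1 g] assms by (auto simp: cbox_interval box_real)

lemma phi_int: assumes "1 \<le> n" "n \<le> k"
  shows "(phi k n has_integral 1 / fact k) {0..1}"
proof -
  have B: "((\<lambda>t. t powr (real n - 1) * (1 - t) powr (real (k - n + 1) - 1)) has_integral
        Beta (real n) (real (k - n + 1))) {0..1}"
    using assms by (intro has_integral_Beta_real) auto
  have g1: "Gamma (real n) = fact (n - 1)"
    using Gamma_fact[of "n-1", where 'a=real] assms by (simp add: of_nat_diff)
  have g2: "Gamma (real (k - n + 1)) = fact (k - n)"
    using Gamma_fact[of "k-n", where 'a=real] by (simp add: add.commute)
  have g3: "Gamma (real n + real (k - n + 1)) = fact k"
    using Gamma_fact[of "k", where 'a=real] assms by (simp add: of_nat_diff add.commute)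
  have "Beta (real n) (real (k - n + 1)) = fact (n-1) * fact (k-n) / fact k"
    unfolding Beta_def g1 g2 g3 ..
  with B have B': "((\<lambda>t. t powr (real n - 1) * (1 - t) powr (real (k - n + 1) - 1) / (fact (n-1) * fact (k-n))) has_integral
        1 / fact k) {0..1}"
    using has_integral_divide[OF B, of "fact (n-1) * fact (k-n)"] by simp
  show ?thesis
  proof (rule spike01[OF B'])
    fix t :: real assume "0 < t" "t < 1"
    then have "t powr (real n - 1) = t ^ (n - 1)" "(1 - t) powr (real (k - n + 1) - 1) = (1-t)^(k-n)"
      using assms by (auto simp: powr_realpow[symmetric] of_nat_diff)
    then show "phi k n t = t powr (real n - 1) * (1 - t) powr (real (k - n + 1) - 1) / (fact (n-1) * fact (k-n))"
      unfolding phi_def by simp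
  qed
qed

lemma F_int_y: assumes "is_perm p" "length p \<ge> 1"
  shows "((\<lambda>y. F p x y) has_integral 1 / fact (length p - 1)) {0..1}"
proof -
  let ?k = "length p"
  have "((\<lambda>y. F p x y) has_integral fact ?k * (\<Sum>m\<in>{1..?k}. phi ?k m x * (1 / fact ?k))) {0..1}"
    unfolding F_def
    by (intro has_integral_mult_right has_integral_sum phi_int finite_atLeastAtMost)
       (use perm_app_in[OF assms(1)] in auto)
  moreover have "fact ?k * (\<Sum>m\<in>{1..?k}. phi ?k m x * (1 / fact ?k)) = (1::real) / fact (?k - 1)"
    using PU[OF assms(2), of x] by (simp add: sum_divide_distrib[symmetric])
  ultimately show ?thesis by simp
qed

lemma F_int_x: assumes "is_perm p" "length p \<ge> 1"
  shows "((\<lambda>x. F p x y) has_integral 1 / fact (length p - 1)) {0..1}"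
proof -
  let ?k = "length p"
  have "((\<lambda>x. F p x y) has_integral fact ?k * (\<Sum>m\<in>{1..?k}. (1 / fact ?k) * phi ?k (perm_app p m) y)) {0..1}"
    unfolding F_def
    by (intro has_integral_mult_right has_integral_sum has_integral_mult_left phi_int finite_atLeastAtMost) auto
  moreover have "(\<Sum>m\<in>{1..?k}. phi ?k (perm_app p m) y) = (\<Sum>n\<in>{1..?k}. phi ?k n y)"
    by (rule perm_reindex[OF assms(1)])
  moreover have "fact ?k * (\<Sum>m\<in>{1..?k}. (1 / fact ?k) * phi ?k (perm_app p m) y) = fact ?k * (1 / fact ?k) * (\<Sum>m\<in>{1..?k}. phi ?k (perm_app p m) y)"
    by (simp add: sum_distrib_left)
  ultimately show ?thesis using PU[OF assms(2), of y] by simp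
qed

lemma HS_int_y: assumes "finite S" "\<forall>p\<in>S. is_perm p \<and> length p \<ge> 1"
  shows "((\<lambda>y. HS S c x y) has_integral (\<Sum>p\<in>S. c p * (1 / fact (length p - 1)))) {0..1}"
  unfolding HS_def using assms by (intro has_integral_sum has_integral_mult_right F_int_y) auto

lemma HS_int_x: assumes "finite S" "\<forall>p\<in>S. is_perm p \<and> length p \<ge> 1"
  shows "((\<lambda>x. HS S c x y) has_integral (\<Sum>p\<in>S. c p * (1 / fact (length p - 1)))) {0..1}"
  unfolding HS_def using assms by (intro has_integral_sum has_integral_mult_right F_int_x) auto

lemma const_int_zero:
  assumes "(f has_integral 0) {0..1::real}" "\<And>t. 0 < t \<Longrightarrow> t < 1 \<Longrightarrow> f t = K"
  shows "K = 0"
proof -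
  have "((\<lambda>t. K) has_integral K) {0..1::real}"
    using has_integral_const_real[of K 0 1] by simp
  then have "(f has_integral K) {0..1::real}"
    by (rule spike01) (use assms(2) in auto)
  then show ?thesis using has_integral_unique assms(1) by blast
qed

lemma H_const:
  assumes fin: "finite S" and perms: "\<forall>p\<in>S. is_perm p \<and> length p \<ge> 1"
    and D: "\<And>x y. 0 < x \<Longrightarrow> x < 1 \<Longrightarrow> 0 < y \<Longrightarrow> y < 1 \<Longrightarrow> (\<Sum>p\<in>S. c p * grad_poly p x y) = 0"
    and xy: "0 < x" "x < 1" "0 < y" "y < 1"
  shows "HS S c x y = HS S c (1/2) (1/2)"
proof -
  have perms': "\<forall>p\<in>S. is_perm p" using perms by auto
  have mz: "HS S c u v = HS S c u (1/2) + HS S c (1/2) v - HS S c (1/2) (1/2)"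
    if "0 < u" "u < 1" "0 < v" "v < 1" for u v
    by (rule mixed_zero[OF fin perms']) (use D that in auto)
  let ?IC = "\<Sum>p\<in>S. c p * (1 / fact (length p - 1))"
  have K1: "HS S c x (1/2) - HS S c (1/2) (1/2) = 0"
  proof (rule const_int_zero)
    have "((\<lambda>t. HS S c x t - HS S c (1/2) t) has_integral ?IC - ?IC) {0..1}"
      by (intro has_integral_diff HS_int_y fin perms)
    then show "((\<lambda>t. HS S c x t - HS S c (1/2) t) has_integral 0) {0..1}" by simp
    fix t :: real assume "0 < t" "t < 1"
    then show "HS S c x t - HS S c (1/2) t = HS S c x (1/2) - HS S c (1/2) (1/2)"
      using mz[of x t] xy by simp
  qed
  have K2: "HS S c (1/2) y - HS S c (1/2) (1/2) = 0"
  proof (rule const_int_zero)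
    have "((\<lambda>t. HS S c t y - HS S c t (1/2)) has_integral ?IC - ?IC) {0..1}"
      by (intro has_integral_diff HS_int_x fin perms)
    then show "((\<lambda>t. HS S c t y - HS S c t (1/2)) has_integral 0) {0..1}" by simp
    fix t :: real assume "0 < t" "t < 1"
    then show "HS S c t y - HS S c t (1/2) = HS S c (1/2) y - HS S c (1/2) (1/2)"
      using mz[of t y] xy by simp
  qed
  show ?thesis using mz[OF xy] K1 K2 by simp
qed

lemma phi_subst:
  assumes "t > 0" "1 \<le> b" "b \<le> k"
  shows "phi k b (t / (1 + t)) = t^(b-1) / (fact (b-1) * fact (k-b)) / (1+t)^(k-1)"
proof -
  have "1 - t / (1 + t) = 1 / (1 + t)" using assms by (simp add: field_simps)
  then have "phi k b (t / (1 + t)) = t^(b-1) / ((1+t)^(b-1) * (1+t)^(k-b)) / (fact (b-1) * fact (k-b))"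
    unfolding phi_def by (simp add: power_divide)
  also have "(1+t)^(b-1) * (1+t)^(k-b) = (1+t)^(k-1)"
    using assms by (simp add: power_add[symmetric])
  finally show ?thesis by simp
qed

lemma BI:
  assumes k: "k \<ge> 1" and h: "\<And>y. 0 < y \<Longrightarrow> y < 1 \<Longrightarrow> (\<Sum>b\<in>{1..k}. a b * phi k b y) = 0"
    and b: "b \<in> {1..k}"
  shows "a b = 0"
proof -
  define cc where "cc i = a (Suc i) / (fact i * fact (k - Suc i))" for i
  have z: "(\<Sum>i\<le>k-1. cc i * t^i) = 0" if t: "0 < t" "t < 1" for t :: real
  proof -
    have y: "0 < t / (1 + t)" "t / (1 + t) < 1" using t by (auto simp: field_simps)
    have "0 = (\<Sum>b\<in>{1..k}. a b * phi k b (t / (1 + t)))" using h[OF y] by simp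
    also have "\<dots> = (\<Sum>b\<in>{1..k}. a b * (t^(b-1) / (fact (b-1) * fact (k-b)))) / (1+t)^(k-1)"
      unfolding sum_divide_distrib by (rule sum.cong[OF refl]) (use t phi_subst in auto)
    also have "(\<Sum>b\<in>{1..k}. a b * (t^(b-1) / (fact (b-1) * fact (k-b)))) = (\<Sum>i\<le>k-1. cc i * t^i)"
      unfolding sum_1k[OF k] cc_def by simp
    finally show ?thesis using t by simp
  qed
  have "{0<..<1::real} \<subseteq> {t. (\<Sum>i\<le>k-1. cc i * t^i) = 0}" using z by auto
  moreover have "infinite {0<..<1::real}" by simp
  ultimately have "infinite {t::real. (\<Sum>i\<le>k-1. cc i * t^i) = 0}" using finite_subset by blast
  then have "\<forall>i\<le>k-1. cc i = 0" using polyfun_finite_roots[of cc "k-1"] by auto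
  then have "cc (b-1) = 0" using b by auto
  then show ?thesis using b unfolding cc_def by simp
qed

lemma BIc:
  assumes k: "k \<ge> 1" and h: "\<And>y. 0 < y \<Longrightarrow> y < 1 \<Longrightarrow> (\<Sum>b\<in>{1..k}. a b * phi k b y) = C"
    and b: "b \<in> {1..k}"
  shows "a b = C * fact (k-1)"
proof -
  have "(\<Sum>b\<in>{1..k}. (a b - C * fact (k-1)) * phi k b y) = 0" if "0 < y" "y < 1" for y
  proof -
    have "(\<Sum>b\<in>{1..k}. (a b - C * fact (k-1)) * phi k b y)
        = (\<Sum>b\<in>{1..k}. a b * phi k b y) - C * fact (k-1) * (\<Sum>b\<in>{1..k}. phi k b y)"
      by (simp add: algebra_simps sum_subtractf sum_distrib_left)
    also have "\<dots> = 0" using h[OF that] PU[OF k] by simp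
    finally show ?thesis .
  qed
  from BI[OF k this b] show ?thesis by simp
qed

definition E :: "nat \<Rightarrow> nat \<Rightarrow> nat \<Rightarrow> nat \<Rightarrow> real" where
  "E k k' b z = (if z \<le> b \<and> b \<le> z + (k - k') then
      real ((k - k') choose (b - z)) * fact (b - 1) * fact (k - b) / (fact (z - 1) * fact (k' - z)) else 0)"

lemma elev:
  assumes "1 \<le> z" "z \<le> k'" "k' \<le> k"
  shows "phi k' z y = (\<Sum>b\<in>{1..k}. E k k' b z * phi k b y)"
proof -
  define d where "d = k - k'"
  have "phi k' z y = (y + (1 - y))^d * phi k' z y" by simp
  also have "\<dots> = (\<Sum>i\<le>d. real (d choose i) * y^i * (1-y)^(d-i) * phi k' z y)"
    unfolding binomial_ring sum_distrib_right by simp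
  also have "\<dots> = (\<Sum>i\<le>d. E k k' (i + z) z * phi k (i + z) y)"
  proof (rule sum.cong[OF refl])
    fix i assume "i \<in> {..d}"
    then have i: "i \<le> d" by simp
    have e1: "i + z - 1 = i + (z - 1)" using assms by simp
    have e2: "k - (i + z) = (d - i) + (k' - z)" using assms i unfolding d_def by simp
    have e3: "i + z - z = i" by simp
    have "E k k' (i + z) z = real (d choose i) * fact (i + z - 1) * fact (k - (i + z)) / (fact (z - 1) * fact (k' - z))"
      unfolding E_def d_def[symmetric] using i by (simp add: e3)
    then show "real (d choose i) * y^i * (1-y)^(d-i) * phi k' z y = E k k' (i + z) z * phi k (i + z) y"
      unfolding phi_def e1 e2 by (simp add: power_add field_simps)
  qed
  also have "\<dots> = (\<Sum>b\<in>{z..d+z}. E k k' b z * phi k b y)"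
    using sum.shift_bounds_cl_nat_ivl[of "\<lambda>b. E k k' b z * phi k b y" 0 z d] by (simp add: atLeast0AtMost)
  also have "\<dots> = (\<Sum>b\<in>{1..k}. E k k' b z * phi k b y)"
    by (rule sum.mono_neutral_left) (use assms in \<open>auto simp: E_def d_def\<close>)
  finally show ?thesis .
qed

definition Mx :: "nat list set \<Rightarrow> (nat list \<Rightarrow> real) \<Rightarrow> nat \<Rightarrow> nat \<Rightarrow> nat \<Rightarrow> real" where
  "Mx S c k m b = (\<Sum>p\<in>S. c p * (fact (length p) *
      (\<Sum>j\<in>{1..length p}. E k (length p) m j * E k (length p) b (perm_app p j))))"

lemma F_expand:
  assumes "is_perm p" "1 \<le> length p" "length p \<le> k"
  shows "F p x y = (\<Sum>m\<in>{1..k}. \<Sum>b\<in>{1..k}. phi k m x * phi k b y *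
     (fact (length p) * (\<Sum>j\<in>{1..length p}. E k (length p) m j * E k (length p) b (perm_app p j))))"
proof -
  let ?k = "length p"
  have "F p x y = fact ?k * (\<Sum>j\<in>{1..?k}. (\<Sum>m\<in>{1..k}. E k ?k m j * phi k m x) *
        (\<Sum>b\<in>{1..k}. E k ?k b (perm_app p j) * phi k b y))"
    unfolding F_def
    by (rule arg_cong[where f="\<lambda>u. fact ?k * u"], rule sum.cong[OF refl])
       (use assms perm_app_in[OF assms(1)] elev in auto)
  also have "\<dots> = fact ?k * (\<Sum>j\<in>{1..?k}. \<Sum>m\<in>{1..k}. \<Sum>b\<in>{1..k}.
        phi k m x * phi k b y * (E k ?k m j * E k ?k b (perm_app p j)))"
    by (simp add: sum_product mult_ac)
  also have "\<dots> = fact ?k * (\<Sum>m\<in>{1..k}. \<Sum>j\<in>{1..?k}. \<Sum>b\<in>{1..k}.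
        phi k m x * phi k b y * (E k ?k m j * E k ?k b (perm_app p j)))"
    by (subst sum.swap) simp
  also have "\<dots> = fact ?k * (\<Sum>m\<in>{1..k}. \<Sum>b\<in>{1..k}. \<Sum>j\<in>{1..?k}.
        phi k m x * phi k b y * (E k ?k m j * E k ?k b (perm_app p j)))"
    by (subst (2) sum.swap) simp
  also have "\<dots> = (\<Sum>m\<in>{1..k}. \<Sum>b\<in>{1..k}. phi k m x * phi k b y *
     (fact ?k * (\<Sum>j\<in>{1..?k}. E k ?k m j * E k ?k b (perm_app p j))))"
    by (simp add: sum_distrib_left mult_ac)
  finally show ?thesis .
qed

lemma HS_expand:
  assumes "finite S" "\<forall>p\<in>S. is_perm p \<and> 1 \<le> length p \<and> length p \<le> k"
  shows "HS S c x y = (\<Sum>m\<in>{1..k}. phi k m x * (\<Sum>b\<in>{1..k}. Mx S c k m b * phi k b y))"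
proof -
  have "HS S c x y = (\<Sum>p\<in>S. c p * (\<Sum>m\<in>{1..k}. \<Sum>b\<in>{1..k}. phi k m x * phi k b y *
     (fact (length p) * (\<Sum>j\<in>{1..length p}. E k (length p) m j * E k (length p) b (perm_app p j)))))"
    unfolding HS_def by (rule sum.cong[OF refl]) (use assms F_expand in auto)
  also have "\<dots> = (\<Sum>p\<in>S. \<Sum>m\<in>{1..k}. \<Sum>b\<in>{1..k}. phi k m x * phi k b y * (c p *
     (fact (length p) * (\<Sum>j\<in>{1..length p}. E k (length p) m j * E k (length p) b (perm_app p j)))))"
    by (simp add: sum_distrib_left mult_ac)
  also have "\<dots> = (\<Sum>m\<in>{1..k}. \<Sum>p\<in>S. \<Sum>b\<in>{1..k}. phi k m x * phi k b y * (c p *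
     (fact (length p) * (\<Sum>j\<in>{1..length p}. E k (length p) m j * E k (length p) b (perm_app p j)))))"
    by (subst sum.swap) simp
  also have "\<dots> = (\<Sum>m\<in>{1..k}. \<Sum>b\<in>{1..k}. \<Sum>p\<in>S. phi k m x * phi k b y * (c p *
     (fact (length p) * (\<Sum>j\<in>{1..length p}. E k (length p) m j * E k (length p) b (perm_app p j)))))"
    by (subst (2) sum.swap) simp
  also have "\<dots> = (\<Sum>m\<in>{1..k}. phi k m x * (\<Sum>b\<in>{1..k}. Mx S c k m b * phi k b y))"
    unfolding Mx_def by (simp add: sum_distrib_left mult_ac)
  finally show ?thesis .
qed

lemma M_const:
  assumes fin: "finite S" and perms: "\<forall>p\<in>S. is_perm p \<and> 1 \<le> length p \<and> length p \<le> k"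
    and k: "k \<ge> 1"
    and H: "\<And>x y. 0 < x \<Longrightarrow> x < 1 \<Longrightarrow> 0 < y \<Longrightarrow> y < 1 \<Longrightarrow> HS S c x y = C"
    and mb: "m \<in> {1..k}" "b \<in> {1..k}"
  shows "Mx S c k m b = C * fact (k-1) * fact (k-1)"
proof -
  have row: "(\<Sum>b\<in>{1..k}. Mx S c k m b * phi k b y) = C * fact (k-1)" if y: "0 < y" "y < 1" for y
  proof (rule BIc[OF k _ mb(1), where a="\<lambda>m. \<Sum>b\<in>{1..k}. Mx S c k m b * phi k b y"])
    fix x :: real assume "0 < x" "x < 1"
    then show "(\<Sum>m\<in>{1..k}. (\<Sum>b\<in>{1..k}. Mx S c k m b * phi k b y) * phi k m x) = C"
      using H[of x y] y HS_expand[OF fin perms, of c x y] by (simp add: mult_ac)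
  qed
  show ?thesis by (rule BIc[OF k _ mb(2), where a="\<lambda>b. Mx S c k m b"]) (use row in auto)
qed

lemma E_same: assumes "1 \<le> z" "z \<le> k" shows "E k k b z = (if b = z then 1 else 0)"
  using assms unfolding E_def by auto

lemma E_nonneg: "E k k' b z \<ge> 0"
  unfolding E_def by auto

lemma E_pos: assumes "z \<le> b" "b \<le> z + (k - k')" shows "E k k' b z > 0"
  using assms unfolding E_def by auto

lemma E_out: assumes "\<not> (z \<le> b \<and> b \<le> z + (k - k'))" shows "E k k' b z = 0"
  using assms unfolding E_def by auto

lemma E_row1: assumes "1 \<le> j" "j \<le> k'" "k' \<le> k"
  shows "E k k' 1 j = (if j = 1 then fact (k-1) / fact (k'-1) else 0)"
  using assms unfolding E_def by auto

lemma E_rowk: assumes "1 \<le> j" "j \<le> k'" "k' \<le> k"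
  shows "E k k' k j = (if j = k' then fact (k-1) / fact (k'-1) else 0)"
proof (cases "j = k'")
  case True
  then show ?thesis using assms unfolding E_def by auto
next
  case False
  then show ?thesis using assms unfolding E_def by auto
qed

lemma E_row2: assumes "1 \<le> j" "j \<le> k'" "k = k' + 1" "k' \<ge> 2"
  shows "E k k' 2 j = (if j = 1 then 1 else if j = 2 then real (k - 2) else 0)"
proof -
  consider "j = 1" | "j = 2" | "j \<ge> 3" using assms by linarith
  then show ?thesis
  proof cases
    case 1
    then show ?thesis using assms unfolding E_def by auto
  next
    case 2
    have e: "Suc (k - 3) = k - 2" using assms by simp
    have "fact (k - 2) = real (k-2) * fact (k - 3)"
      using fact_Suc[of "k-3"] unfolding e by simp
    then show ?thesis using 2 assms unfolding E_def by (auto simp: numeral_3_eq_3 numeral_2_eq_2)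
  next
    case 3
    then show ?thesis using assms unfolding E_def by auto
  qed
qed

lemma sum_single:
  assumes "is_perm p" "b \<in> {1..length p}"
  shows "(\<Sum>j\<in>{1..length p}. (if j = m then g j else 0)) = (if m \<in> {1..length p} then g m else 0)"
  by (simp add: sum.delta')

lemma term_same:
  assumes "is_perm p" "length p = k" "m \<in> {1..k}" "b \<in> {1..k}"
  shows "fact (length p) * (\<Sum>j\<in>{1..length p}. E k (length p) m j * E k (length p) b (perm_app p j))
     = fact k * (if perm_app p m = b then 1 else 0)"
proof -
  have "(\<Sum>j\<in>{1..k}. E k k m j * E k k b (perm_app p j)) = (\<Sum>j\<in>{1..k}. if j = m then (if perm_app p j = b then 1 else 0) else 0)"
  proof (rule sum.cong[OF refl])
    fix j assume j: "j \<in> {1..k}"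
    then have "perm_app p j \<in> {1..k}" using perm_app_in[OF assms(1)] assms(2) by auto
    then show "E k k m j * E k k b (perm_app p j) = (if j = m then (if perm_app p j = b then 1 else 0) else 0)"
      using j E_same[of j k m] E_same[of "perm_app p j" k b] by auto
  qed
  also have "\<dots> = (if perm_app p m = b then 1 else 0)" using assms(3) by (simp add: sum.delta')
  finally show ?thesis using assms(2) by simp
qed

lemma term_row1:
  assumes "is_perm p" "length p = k'" "1 \<le> k'" "k' \<le> k"
  shows "(\<Sum>j\<in>{1..k'}. E k k' 1 j * E k k' b (perm_app p j)) = fact (k-1) / fact (k'-1) * E k k' b (perm_app p 1)"
proof -
  have "(\<Sum>j\<in>{1..k'}. E k k' 1 j * E k k' b (perm_app p j)) = (\<Sum>j\<in>{1..k'}. if j = 1 then fact (k-1) / fact (k'-1) * E k k' b (perm_app p j) else 0)"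
    by (rule sum.cong[OF refl]) (use assms E_row1 in auto)
  also have "\<dots> = fact (k-1) / fact (k'-1) * E k k' b (perm_app p 1)" using assms by (simp add: sum.delta')
  finally show ?thesis .
qed

lemma term_rowk:
  assumes "is_perm p" "length p = k'" "1 \<le> k'" "k' \<le> k"
  shows "(\<Sum>j\<in>{1..k'}. E k k' k j * E k k' b (perm_app p j)) = fact (k-1) / fact (k'-1) * E k k' b (perm_app p k')"
proof -
  have "(\<Sum>j\<in>{1..k'}. E k k' k j * E k k' b (perm_app p j)) = (\<Sum>j\<in>{1..k'}. if j = k' then fact (k-1) / fact (k'-1) * E k k' b (perm_app p j) else 0)"
    by (rule sum.cong[OF refl]) (use assms E_rowk in auto)
  also have "\<dots> = fact (k-1) / fact (k'-1) * E k k' b (perm_app p k')" using assms by (simp add: sum.delta')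
  finally show ?thesis .
qed

lemma term_row2:
  assumes "is_perm p" "length p = k'" "k = k' + 1" "k' \<ge> 2"
  shows "(\<Sum>j\<in>{1..k'}. E k k' 2 j * E k k' b (perm_app p j)) = E k k' b (perm_app p 1) + real (k-2) * E k k' b (perm_app p 2)"
proof -
  have "(\<Sum>j\<in>{1..k'}. E k k' 2 j * E k k' b (perm_app p j)) = (\<Sum>j\<in>{1..k'}. (if j = 1 then E k k' b (perm_app p j) else 0) + (if j = 2 then real (k-2) * E k k' b (perm_app p j) else 0))"
    by (rule sum.cong[OF refl]) (use assms E_row2 in auto)
  also have "\<dots> = E k k' b (perm_app p 1) + real (k-2) * E k k' b (perm_app p 2)" using assms by (simp add: sum.distrib sum.delta')
  finally show ?thesis .
qed

definition alt :: "nat \<Rightarrow> nat \<Rightarrow> real" where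
  "alt k m = (-1)^(m-1) / (fact (m-1) * fact (k-m))"

lemma alt_sum: assumes "k \<ge> 2" shows "(\<Sum>m\<in>{1..k}. alt k m) = 0"
proof -
  have "(\<Sum>m\<in>{1..k}. alt k m) = (\<Sum>i\<le>k-1. alt k (Suc i))" using assms by (intro sum_1k) auto
  also have "\<dots> = (\<Sum>i\<le>k-1. (-1)^i * real ((k-1) choose i)) / fact (k-1)"
    unfolding sum_divide_distrib
  proof (rule sum.cong[OF refl])
    fix i assume "i \<in> {..k-1}"
    then have i: "i \<le> k-1" by simp
    have "k - Suc i = k - 1 - i" by simp
    then show "alt k (Suc i) = (-1)^i * real ((k-1) choose i) / fact (k-1)"
      unfolding alt_def using i by (simp add: binomial_fact field_simps)
  qed
  also have "(\<Sum>i\<le>k-1. (-1)^i * real ((k-1) choose i)) = 0"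
    using assms by (intro choose_alternating_sum) auto
  finally show ?thesis by simp
qed

lemma alt_E: assumes "k' < k" "1 \<le> j" "j \<le> k'"
  shows "(\<Sum>m\<in>{1..k}. alt k m * E k k' m j) = 0"
proof -
  define d where "d = k - k'"
  have d: "d \<ge> 1" using assms unfolding d_def by simp
  have "(\<Sum>m\<in>{1..k}. alt k m * E k k' m j) = (\<Sum>m\<in>{j..d+j}. alt k m * E k k' m j)"
    by (rule sum.mono_neutral_right) (use assms in \<open>auto simp: E_def d_def\<close>)
  also have "\<dots> = (\<Sum>i\<le>d. alt k (i+j) * E k k' (i+j) j)"
    using sum.shift_bounds_cl_nat_ivl[of "\<lambda>m. alt k m * E k k' m j" 0 j d] by (simp add: atLeast0AtMost)
  also have "\<dots> = (\<Sum>i\<le>d. ((-1)^i * real (d choose i)) * ((-1)^(j-1) / (fact (j-1) * fact (k'-j))))"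
  proof (rule sum.cong[OF refl])
    fix i assume "i \<in> {..d}"
    then have i: "i \<le> d" by simp
    have e1: "i + j - 1 = i + (j - 1)" using assms by simp
    have "E k k' (i+j) j = real (d choose i) * fact (i + j - 1) * fact (k - (i+j)) / (fact (j-1) * fact (k'-j))"
      unfolding E_def d_def[symmetric] using i by simp
    then show "alt k (i+j) * E k k' (i+j) j = ((-1)^i * real (d choose i)) * ((-1)^(j-1) / (fact (j-1) * fact (k'-j)))"
      unfolding alt_def e1 by (simp add: power_add field_simps)
  qed
  also have "\<dots> = (\<Sum>i\<le>d. (-1)^i * real (d choose i)) * ((-1)^(j-1) / (fact (j-1) * fact (k'-j)))"
    by (rule sum_distrib_right[symmetric])
  also have "(\<Sum>i\<le>d. (-1)^i * real (d choose i)) = 0" using d by (intro choose_alternating_sum) auto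
  finally show ?thesis by simp
qed

lemma fact_pred: "n \<ge> 1 \<Longrightarrow> fact n = real n * (fact (n-1) :: real)"
  by (cases n) auto

lemma E21: assumes "1 \<le> b" "b < k" shows "E k 2 b 1 = fact (k-2) * real (k-b)"
proof -
  have "E k 2 b 1 = real ((k-2) choose (b-1)) * fact (b-1) * fact (k-b)"
    using assms by (simp add: E_def)
  also have "real ((k-2) choose (b-1)) = fact (k-2) / (fact (b-1) * fact (k-2-(b-1)))"
    by (rule binomial_fact) (use assms in simp)
  also have "k-2-(b-1) = k-b-1" using assms by simp
  also have "fact (k-b) = real (k-b) * (fact (k-b-1) :: real)" using assms by (intro fact_pred) simp
  finally show ?thesis by simp
qed

lemma E22: assumes "2 \<le> b" "b \<le> k" shows "E k 2 b 2 = fact (k-2) * real (b-1)"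
proof -
  have "E k 2 b 2 = real ((k-2) choose (b-2)) * fact (b-1) * fact (k-b)"
    using assms by (simp add: E_def)
  also have "real ((k-2) choose (b-2)) = fact (k-2) / (fact (b-2) * fact (k-2-(b-2)))"
    by (rule binomial_fact) (use assms in simp)
  also have "k-2-(b-2) = k-b" using assms by simp
  also have "fact (b-1) = real (b-1) * (fact (b-2) :: real)"
    using assms fact_pred[of "b-1"] by (simp add: numeral_2_eq_2)
  finally show ?thesis by simp
qed

lemma E_val: "z \<le> b \<Longrightarrow> b \<le> z + (k - k') \<Longrightarrow> E k k' b z = real ((k-k') choose (b-z)) * fact (b-1) * fact (k-b) / (fact (z-1) * fact (k'-z))"
  by (simp add: E_def)

lemma E3_1: assumes "k \<ge> 4" shows "E k 3 1 1 = real (k-1) * fact (k-2) / 2" "E k 3 2 1 = real (k-3) * fact (k-2) / 2"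
proof -
  have "E k 3 1 1 = real ((k-3) choose 0) * fact 0 * fact (k-1) / (fact 0 * fact 2)"
    using E_val[of 1 1 k 3] assms by simp
  also have "fact (k-1) = real (k-1) * (fact (k-2) :: real)"
    using assms fact_pred[of "k-1"] by (simp add: numeral_2_eq_2)
  finally show "E k 3 1 1 = real (k-1) * fact (k-2) / 2" by simp
  have "E k 3 2 1 = real ((k-3) choose 1) * fact 1 * fact (k-2) / (fact 0 * fact 2)"
    using E_val[of 1 2 k 3] assms by simp
  then show "E k 3 2 1 = real (k-3) * fact (k-2) / 2" by simp
qed

lemma E3_3: assumes "k \<ge> 4" shows "E k 3 k 3 = real (k-1) * fact (k-2) / 2" "E k 3 (k-1) 3 = real (k-3) * fact (k-2) / 2"
proof -
  have "E k 3 k 3 = real ((k-3) choose (k-3)) * fact (k-1) * fact 0 / (fact 2 * fact 0)"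
    using E_val[of 3 k k 3] assms by simp
  also have "fact (k-1) = real (k-1) * (fact (k-2) :: real)"
    using assms fact_pred[of "k-1"] by (simp add: numeral_2_eq_2)
  finally show "E k 3 k 3 = real (k-1) * fact (k-2) / 2" by simp
  obtain n where n: "k = 4 + n" using assms by (auto dest: le_Suc_ex)
  have e: "k - 1 - 3 = n" "k - (k - 1) = 1" "k - 1 - 1 = k - 2" "k - 3 = Suc n" using n by auto
  have "E k 3 (k-1) 3 = real ((k-3) choose (k-1-3)) * fact (k-1-1) * fact (k-(k-1)) / (fact 2 * fact 0)"
    using E_val[of 3 "k-1" k 3] assms by simp
  also have "(k-3) choose (k-1-3) = k - 3" unfolding e by (rule binomial_Suc_n)
  finally show "E k 3 (k-1) 3 = real (k-3) * fact (k-2) / 2" unfolding e by simp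
qed

lemma E3_2: assumes "k \<ge> 4" shows "E k 3 2 2 = fact (k-2)" "E k 3 3 2 = 2 * real (k-3) * fact (k-3)"
proof -
  show "E k 3 2 2 = fact (k-2)"
    using E_val[of 2 2 k 3] assms by simp
  have "E k 3 3 2 = real ((k-3) choose 1) * fact 2 * fact (k-3) / (fact 1 * fact 1)"
    using E_val[of 2 3 k 3] assms by simp
  then show "E k 3 3 2 = 2 * real (k-3) * fact (k-3)" by simp
qed

lemma diff_index:
  assumes "length q1 = length q2" "q1 \<noteq> q2"
  shows "\<exists>m\<in>{1..length q1}. perm_app q1 m \<noteq> perm_app q2 m"
proof (rule ccontr)
  assume "\<not> ?thesis"
  assume ne: "\<not> ?thesis"
  have "q1 ! i = q2 ! i" if i: "i < length q1" for i
  proof -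
    have "Suc i \<in> {1..length q1}" using i by auto
    then have "perm_app q1 (Suc i) = perm_app q2 (Suc i)" using ne by blast
    then show ?thesis by (simp add: perm_app_def)
  qed
  then have "\<forall>i<length q1. q1 ! i = q2 ! i" by blast
  then have "q1 = q2" using assms(1) by (intro nth_equalityI) auto
  then show False using assms(2) by simp
qed

lemma avoid: assumes "finite A" "card A < k" shows "\<exists>b\<in>{1..k}. b \<notin> A"
proof (rule ccontr)
  assume "\<not> ?thesis"
  then have "{1..k} \<subseteq> A" by auto
  then have "card {1..k} \<le> card A" using assms(1) by (rule card_mono[rotated])
  then show False using assms(2) by simp
qed

lemma card2: "card {x, y} \<le> 2" by (cases "x = y") auto
lemma card3: "card {x, y, w} \<le> 3"
proof -
  have "card {x, y, w} \<le> Suc (card {y, w})" by (simp add: card_insert_if)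
  then show ?thesis using card2[of y w] by simp
qed

lemma pair_lemma:
  assumes "is_perm q1" "is_perm q2" "length q1 = k" "length q2 = k" "k \<ge> 3" "q1 \<noteq> q2"
    and h: "\<And>m b. m \<in> {1..k} \<Longrightarrow> b \<in> {1..k} \<Longrightarrow>
      a1 * (if perm_app q1 m = b then 1 else 0) + a2 * (if perm_app q2 m = b then 1 else 0) = (C::real)"
  shows "a1 = 0 \<and> a2 = 0"
proof -
  obtain b0 where b0: "b0 \<in> {1..k}" "b0 \<notin> {perm_app q1 1, perm_app q2 1}"
    using avoid[of "{perm_app q1 1, perm_app q2 1}" k] card2[of "perm_app q1 1" "perm_app q2 1"] assms(5) by auto
  have C: "C = 0" using h[of 1 b0] b0 assms(5) by auto
  obtain m where m: "m \<in> {1..k}" "perm_app q1 m \<noteq> perm_app q2 m"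
    using diff_index[of q1 q2] assms by auto
  have i1: "perm_app q1 m \<in> {1..k}" "perm_app q2 m \<in> {1..k}"
    using perm_app_in[OF assms(1)] perm_app_in[OF assms(2)] m assms(3,4) by auto
  have "a1 = 0" using h[OF m(1) i1(1)] m(2) C by auto
  moreover have "a2 = 0" using h[OF m(1) i1(2)] m(2) C by auto
  ultimately show ?thesis by simp
qed

lemma triple_lemma:
  assumes "is_perm q1" "is_perm q2" "is_perm q3" "length q1 = k" "length q2 = k" "length q3 = k" "k \<ge> 4"
    "q1 \<noteq> q2" "q1 \<noteq> q3" "q2 \<noteq> q3"
    and h: "\<And>m b. m \<in> {1..k} \<Longrightarrow> b \<in> {1..k} \<Longrightarrow>
      a1 * (if perm_app q1 m = b then 1 else 0) + a2 * (if perm_app q2 m = b then 1 else 0)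
      + a3 * (if perm_app q3 m = b then 1 else 0) = (C::real)"
  shows "a1 = 0 \<and> a2 = 0 \<and> a3 = 0"
proof -
  obtain b0 where b0: "b0 \<in> {1..k}" "b0 \<notin> {perm_app q1 1, perm_app q2 1, perm_app q3 1}"
    using avoid[of "{perm_app q1 1, perm_app q2 1, perm_app q3 1}" k] card3[of "perm_app q1 1" "perm_app q2 1" "perm_app q3 1"] assms(7) by auto
  have C: "C = 0" using h[of 1 b0] b0 assms(7) by auto
  have inr: "perm_app q m \<in> {1..k}" if "q \<in> {q1,q2,q3}" "m \<in> {1..k}" for q m
    using perm_app_in[of q m] that assms(1-6) by auto
  obtain m where m: "m \<in> {1..k}" "perm_app q1 m \<noteq> perm_app q2 m"
    using diff_index[of q1 q2] assms by auto
  have e1: "a1 + a3 * (if perm_app q3 m = perm_app q1 m then 1 else 0) = 0"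
    using h[OF m(1) inr[of q1 m]] m C by auto
  have e2: "a2 + a3 * (if perm_app q3 m = perm_app q2 m then 1 else 0) = 0"
    using h[OF m(1) inr[of q2 m]] m C by auto
  have e3: "a3 + a1 * (if perm_app q1 m = perm_app q3 m then 1 else 0) + a2 * (if perm_app q2 m = perm_app q3 m then 1 else 0) = 0"
    using h[OF m(1) inr[of q3 m]] m C by (auto simp: algebra_simps)
  consider "perm_app q3 m \<noteq> perm_app q1 m \<and> perm_app q3 m \<noteq> perm_app q2 m"
    | "perm_app q3 m = perm_app q1 m" | "perm_app q3 m = perm_app q2 m" by blast
  then show ?thesis
  proof cases
    case 1
    then show ?thesis using e1 e2 e3 by auto
  next
    case 2
    then have a2: "a2 = 0" and a13: "a1 + a3 = 0" using e1 e2 m(2) by auto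
    obtain m' where m': "m' \<in> {1..k}" "perm_app q1 m' \<noteq> perm_app q3 m'"
      using diff_index[of q1 q3] assms by auto
    have "a1 = 0" using h[OF m'(1) inr[of q1 m']] m' C a2 by auto
    then show ?thesis using a2 a13 by simp
  next
    case 3
    then have a1: "a1 = 0" and a23: "a2 + a3 = 0" using e1 e2 m(2) by auto
    obtain m' where m': "m' \<in> {1..k}" "perm_app q2 m' \<noteq> perm_app q3 m'"
      using diff_index[of q2 q3] assms by auto
    have "a2 = 0" using h[OF m'(1) inr[of q2 m']] m' C a1 by auto
    then show ?thesis using a1 a23 by simp
  qed
qed

lemma pick2:
  assumes "{x, y} \<subseteq> {o1, w}" "c1 \<noteq> o1" "c2 \<noteq> o1" "c3 \<noteq> o1" "c1 \<noteq> c2" "c1 \<noteq> c3" "c2 \<noteq> c3"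
  shows "\<exists>b1 b2. b1 \<in> {c1, c2, c3} \<and> b2 \<in> {c1, c2, c3} \<and> b1 \<noteq> b2 \<and> b1 \<noteq> x \<and> b1 \<noteq> y \<and> b2 \<noteq> x \<and> b2 \<noteq> y"
proof (cases "w = c1")
  case True
  then show ?thesis using assms by (intro exI[of _ c2] exI[of _ c3]) auto
next
  case False
  show ?thesis
  proof (cases "w = c2")
    case True
    then show ?thesis using assms by (intro exI[of _ c1] exI[of _ c3]) auto
  next
    case False
    then show ?thesis using assms \<open>w \<noteq> c1\<close> by (intro exI[of _ c1] exI[of _ c2]) auto
  qed
qed

lemma RL:
  assumes k: "4 \<le> k" "2 \<le> k'" "k' < k" and z: "1 \<le> z" "z \<le> k'" and g: "\<gamma> \<noteq> 0"
    and h: "\<And>b. b \<in> {1..k} \<Longrightarrow> A * (if x = b then 1 else 0) + B * (if y = b then 1 else 0) + \<gamma> * E k k' b z = (C::real)"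
  shows "(C = 0 \<and> k = k' + 1) \<or> (C \<noteq> 0 \<and> k = 4 \<and> k' = 3 \<and> z = 2)"
proof (cases "C = 0")
  case True
  have mem: "b = x \<or> b = y" if "b \<in> {1..k}" "z \<le> b" "b \<le> z + (k - k')" for b
  proof (rule ccontr)
    assume "\<not> (b = x \<or> b = y)"
    then have "\<gamma> * E k k' b z = 0" using h[OF that(1)] True by auto
    moreover have "E k k' b z > 0" using E_pos that by auto
    ultimately show False using g by simp
  qed
  have "k = k' + 1"
  proof (rule ccontr)
    assume "k \<noteq> k' + 1"
    then have "z + 2 \<le> z + (k - k')" using k by simp
    then have "z = x \<or> z = y" "z+1 = x \<or> z+1 = y" "z+2 = x \<or> z+2 = y"
      using mem[of z] mem[of "z+1"] mem[of "z+2"] z k by auto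
    then show False by auto
  qed
  then show ?thesis using True by simp
next
  case False
  have zin: "b = x \<or> b = y" if "b \<in> {1..k}" "\<not> (z \<le> b \<and> b \<le> z + (k - k'))" for b
  proof (rule ccontr)
    assume "\<not> (b = x \<or> b = y)"
    then have "C = 0" using h[OF that(1)] E_out[OF that(2)] by auto
    then show False using False by simp
  qed
  have eqC: "\<gamma> * E k k' b z = C" if "b \<in> {1..k}" "b \<noteq> x" "b \<noteq> y" for b
    using h[OF that(1)] that by auto
  have sub: "{1..k} - {z..z + (k-k')} \<subseteq> {x, y}"
  proof
    fix b assume "b \<in> {1..k} - {z..z + (k-k')}"
    then have "b \<in> {1..k}" "\<not> (z \<le> b \<and> b \<le> z + (k - k'))" by auto
    then show "b \<in> {x, y}" using zin by blast
  qed
  have "card ({1..k} - {z..z + (k-k')}) = card {1..k} - card {z..z + (k-k')}"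
    using z k by (intro card_Diff_subset) auto
  also have "\<dots> = k' - 1" using z k by simp
  finally have c1: "card ({1..k} - {z..z + (k-k')}) = k' - 1" .
  have "card ({1..k} - {z..z + (k-k')}) \<le> card {x,y}" using sub by (intro card_mono) auto
  then have "k' \<le> 3" using c1 card2[of x y] by simp
  then consider "k' = 2" | "k' = 3" using k by linarith
  then show ?thesis
  proof cases
    case 1
    have fp: "fact (k-2) > (0::real)" by simp
    have two: "E k 2 b1 z = E k 2 b2 z" if "b1 \<in> {1..k}" "b2 \<in> {1..k}" "b1 \<noteq> x" "b1 \<noteq> y" "b2 \<noteq> x" "b2 \<noteq> y" for b1 b2
    proof -
      have e1: "\<gamma> * E k k' b1 z = C" using eqC that(1,3,4) by blast
      have e2: "\<gamma> * E k k' b2 z = C" using eqC that(2,5,6) by blast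
      have "\<gamma> * E k k' b1 z = \<gamma> * E k k' b2 z" using e1 e2 by simp
      then show ?thesis using g 1 by simp
    qed
    consider "z = 1" | "z = 2" using z 1 by linarith
    then show ?thesis
    proof cases
      case z1: 1
      have "k = x \<or> k = y" using zin[of k] z1 1 k by auto
      then have sxy: "{x, y} \<subseteq> {k, if x = k then y else x}" by auto
      have "\<exists>b1 b2. b1 \<in> {1, 2, 3} \<and> b2 \<in> {1, 2, 3} \<and> b1 \<noteq> b2 \<and> b1 \<noteq> x \<and> b1 \<noteq> y \<and> b2 \<noteq> x \<and> b2 \<noteq> y"
        by (rule pick2[OF sxy]) (use k in auto)
      then obtain b1 b2 where bb: "b1 \<in> {1, 2, 3}" "b2 \<in> {1, 2, 3}" "b1 \<noteq> b2" "b1 \<noteq> x" "b1 \<noteq> y" "b2 \<noteq> x" "b2 \<noteq> y"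
        by blast
      have r: "1 \<le> b1" "b1 < k" "1 \<le> b2" "b2 < k" using bb(1,2) k(1) by auto
      have "E k 2 b1 z = E k 2 b2 z" using two[of b1 b2] bb r by simp
      then have "fact (k-2) * real (k-b1) = fact (k-2) * real (k-b2)"
        using E21[of b1 k] E21[of b2 k] r z1 by simp
      then have "real (k-b1) = real (k-b2)" using fp by simp
      then have "b1 = b2" using r by simp
      then show ?thesis using bb(3) by simp
    next
      case z2: 2
      have "1 = x \<or> 1 = y" using zin[of 1] z2 1 k by auto
      then have sxy: "{x, y} \<subseteq> {1, if x = 1 then y else x}" by auto
      have "\<exists>b1 b2. b1 \<in> {k-2, k-1, k} \<and> b2 \<in> {k-2, k-1, k} \<and> b1 \<noteq> b2 \<and> b1 \<noteq> x \<and> b1 \<noteq> y \<and> b2 \<noteq> x \<and> b2 \<noteq> y"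
        by (rule pick2[OF sxy]) (use k in auto)
      then obtain b1 b2 where bb: "b1 \<in> {k-2, k-1, k}" "b2 \<in> {k-2, k-1, k}" "b1 \<noteq> b2" "b1 \<noteq> x" "b1 \<noteq> y" "b2 \<noteq> x" "b2 \<noteq> y"
        by blast
      have r: "2 \<le> b1" "b1 \<le> k" "2 \<le> b2" "b2 \<le> k" using bb(1,2) k(1) by auto
      have "E k 2 b1 z = E k 2 b2 z" using two[of b1 b2] bb r by simp
      then have "fact (k-2) * real (b1-1) = fact (k-2) * real (b2-1)"
        using E22[of b1 k] E22[of b2 k] r z2 by simp
      then have "real (b1-1) = real (b2-1)" using fp by simp
      then have "b1 = b2" using r by simp
      then show ?thesis using bb(3) by simp
    qed
  next
    case 2
    have fpos: "fact (k-2) > (0::real)" "fact (k-3) > (0::real)" by auto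
    consider "z = 1" | "z = 2" | "z = 3" using z 2 by linarith
    then show ?thesis
    proof cases
      case z1: 1
      have "k - 1 = x \<or> k - 1 = y" "k = x \<or> k = y" using zin[of "k-1"] zin[of k] z1 2 k by auto
      then have n12: "1 \<noteq> x" "1 \<noteq> y" "2 \<noteq> x" "2 \<noteq> y" using k by auto
      have "\<gamma> * E k k' 1 z = \<gamma> * E k k' 2 z" using eqC[of 1] eqC[of 2] n12 k by auto
      then have "E k 3 1 1 = E k 3 2 1" using g z1 2 by simp
      then have "real (k-1) * fact (k-2) = real (k-3) * fact (k-2)" using E3_1[OF k(1)] by simp
      then have "real (k-1) = real (k-3)" using fpos by simp
      then show ?thesis using k by simp
    next
      case z3: 3
      have "1 = x \<or> 1 = y" "2 = x \<or> 2 = y" using zin[of 1] zin[of 2] z3 2 k by auto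
      then have n12: "k \<noteq> x" "k \<noteq> y" "k - 1 \<noteq> x" "k - 1 \<noteq> y" using k by auto
      have "\<gamma> * E k k' k z = \<gamma> * E k k' (k-1) z" using eqC[of k] eqC[of "k-1"] n12 k by auto
      then have "E k 3 k 3 = E k 3 (k-1) 3" using g z3 2 by simp
      then have "real (k-1) * fact (k-2) = real (k-3) * fact (k-2)" using E3_3[OF k(1)] by simp
      then have "real (k-1) = real (k-3)" using fpos by simp
      then show ?thesis using k by simp
    next
      case z2: 2
      have "1 = x \<or> 1 = y" "k = x \<or> k = y" using zin[of 1] zin[of k] z2 2 k by auto
      then have n23: "2 \<noteq> x" "2 \<noteq> y" "3 \<noteq> x" "3 \<noteq> y" using k by auto
      have "\<gamma> * E k k' 2 z = \<gamma> * E k k' 3 z" using eqC[of 2] eqC[of 3] n23 k by auto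
      then have "E k 3 2 2 = E k 3 3 2" using g z2 2 by simp
      then have e: "fact (k-2) = 2 * real (k-3) * fact (k-3)" using E3_2[OF k(1)] by simp
      have ek: "k - 2 = Suc (k - 3)" using k by arith
      have "fact (k-2) = real (k-2) * (fact (k-3) :: real)"
        unfolding ek by (rule fact_Suc)
      with e have "real (k-2) * fact (k-3) = (2 * real (k-3)) * fact (k-3)" by simp
      then have r: "real (k-2) = 2 * real (k-3)" using fpos(2) by simp
      have "real (k-2) = real k - 2" "real (k-3) = real k - 3" using k by (simp_all add: of_nat_diff)
      with r have "k = 4" by linarith
      then show ?thesis using False 2 z2 by simp
    qed
  qed
qed

lemma RL2:
  assumes k: "k = k' + 1" "k \<ge> 4" and z: "1 \<le> z1" "z1 \<le> k'" "1 \<le> z2" "z2 \<le> k'" "z1 \<noteq> z2"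
    and g: "\<gamma> \<noteq> 0"
    and h: "\<And>b. b \<in> {1..k} \<Longrightarrow> A * (if x = b then 1 else 0) + B * (if y = b then 1 else 0)
       + \<gamma> * (E k k' b z1 + real (k-2) * E k k' b z2) = (0::real)"
  shows False
proof -
  have mem: "b = x \<or> b = y" if "b \<in> {1..k}" "(z1 \<le> b \<and> b \<le> z1 + 1) \<or> (z2 \<le> b \<and> b \<le> z2 + 1)" for b
  proof (rule ccontr)
    assume "\<not> (b = x \<or> b = y)"
    then have z0: "\<gamma> * (E k k' b z1 + real (k-2) * E k k' b z2) = 0" using h[OF that(1)] by auto
    have k2: "real (k-2) > 0" using k by simp
    have "E k k' b z1 + real (k-2) * E k k' b z2 > 0"
      using that(2)
    proof
      assume "z1 \<le> b \<and> b \<le> z1 + 1"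
      then have "E k k' b z1 > 0" using E_pos[of z1 b k k'] k by auto
      moreover have "real (k-2) * E k k' b z2 \<ge> 0" using E_nonneg k2 by simp
      ultimately show ?thesis by linarith
    next
      assume "z2 \<le> b \<and> b \<le> z2 + 1"
      then have "E k k' b z2 > 0" using E_pos[of z2 b k k'] k by auto
      then have "real (k-2) * E k k' b z2 > 0" using k2 by simp
      moreover have "E k k' b z1 \<ge> 0" using E_nonneg by simp
      ultimately show ?thesis by linarith
    qed
    then show False using z0 g by simp
  qed
  consider "z1 < z2" | "z2 < z1" using z by linarith
  then show False
  proof cases
    case 1
    have "z1 = x \<or> z1 = y" "z2 = x \<or> z2 = y" "z2 + 1 = x \<or> z2 + 1 = y"
      using mem[of z1] mem[of z2] mem[of "z2+1"] z k by auto
    then show False using 1 by auto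
  next
    case 2
    have "z2 = x \<or> z2 = y" "z1 = x \<or> z1 = y" "z1 + 1 = x \<or> z1 + 1 = y"
      using mem[of z1] mem[of z2] mem[of "z1+1"] z k by auto
    then show False using 2 by auto
  qed
qed

definition tm :: "(nat list \<Rightarrow> real) \<Rightarrow> nat list \<Rightarrow> nat \<Rightarrow> nat \<Rightarrow> nat \<Rightarrow> real" where
  "tm c p k m b = c p * (fact (length p) * (\<Sum>j\<in>{1..length p}. E k (length p) m j * E k (length p) b (perm_app p j)))"

lemma Mx_tm: "Mx S c k m b = (\<Sum>p\<in>S. tm c p k m b)"
  by (simp add: Mx_def tm_def)

lemma Mx3: assumes "p1 \<noteq> p2" "p1 \<noteq> p3" "p2 \<noteq> p3"
  shows "Mx {p1, p2, p3} c k m b = tm c p1 k m b + tm c p2 k m b + tm c p3 k m b"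
  using assms by (simp add: Mx_tm)

lemma Mx2: assumes "p2 \<noteq> p3"
  shows "Mx {p2, p3} c k m b = tm c p2 k m b + tm c p3 k m b"
  using assms by (simp add: Mx_tm)

lemma Mx1: "Mx {p3} c k m b = tm c p3 k m b"
  by (simp add: Mx_tm)

lemma tm_same: assumes "is_perm p" "length p = k" "m \<in> {1..k}" "b \<in> {1..k}"
  shows "tm c p k m b = (c p * fact k) * (if perm_app p m = b then 1 else 0)"
  unfolding tm_def using term_same[OF assms] by simp

lemma tm_row1: assumes "is_perm p" "length p = k'" "1 \<le> k'" "k' \<le> k"
  shows "tm c p k 1 b = (c p * fact k' * (fact (k-1) / fact (k'-1))) * E k k' b (perm_app p 1)"
  unfolding tm_def using term_row1[OF assms, of b] assms(2) by simp

lemma tm_rowk: assumes "is_perm p" "length p = k'" "1 \<le> k'" "k' \<le> k"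
  shows "tm c p k k b = (c p * fact k' * (fact (k-1) / fact (k'-1))) * E k k' b (perm_app p k')"
  unfolding tm_def using term_rowk[OF assms, of b] assms(2) by simp

lemma tm_row2: assumes "is_perm p" "length p = k'" "k = k' + 1" "k' \<ge> 2"
  shows "tm c p k 2 b = (c p * fact k') * (E k k' b (perm_app p 1) + real (k-2) * E k k' b (perm_app p 2))"
  unfolding tm_def using term_row2[OF assms, of b] assms(2) by simp

lemma HS_drop: assumes "finite S" "p0 \<notin> S" "c p0 = 0"
  shows "HS (insert p0 S) c x y = HS S c x y"
  using assms by (simp add: HS_def)

lemma alt1: "alt k 1 = 1 / fact (k - 1)"
  by (simp add: alt_def)

lemma top_zero:
  assumes fin: "finite S" and perms: "\<forall>p\<in>S. is_perm p \<and> 1 \<le> length p \<and> length p \<le> k"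
    and p0: "p0 \<in> S" "length p0 = k" and lt: "\<forall>p\<in>S. p \<noteq> p0 \<longrightarrow> length p < k" and k: "k \<ge> 2"
    and M: "\<And>m b. m \<in> {1..k} \<Longrightarrow> b \<in> {1..k} \<Longrightarrow> Mx S c k m b = C"
  shows "c p0 = 0"
proof -
  define b0 where "b0 = perm_app p0 1"
  have ip0: "is_perm p0" using perms p0 by auto
  have b: "b0 \<in> {1..k}" using perm_app_in[OF ip0, of 1] p0(2) k unfolding b0_def by auto
  have L: "(\<Sum>m\<in>{1..k}. alt k m * Mx S c k m b0) = 0"
  proof -
    have "(\<Sum>m\<in>{1..k}. alt k m * Mx S c k m b0) = (\<Sum>m\<in>{1..k}. alt k m * C)"
      using M b by (intro sum.cong) auto
    also have "\<dots> = (\<Sum>m\<in>{1..k}. alt k m) * C" by (simp add: sum_distrib_right)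
    finally show ?thesis using alt_sum[OF k] by simp
  qed
  define G where "G p = c p * (fact (length p) * (\<Sum>j\<in>{1..length p}.
      (\<Sum>m\<in>{1..k}. alt k m * E k (length p) m j) * E k (length p) b0 (perm_app p j)))" for p
  have per: "(\<Sum>m\<in>{1..k}. alt k m * tm c p k m b0) = G p" for p
  proof -
    have "(\<Sum>m\<in>{1..k}. alt k m * tm c p k m b0)
      = c p * (fact (length p) * (\<Sum>m\<in>{1..k}. \<Sum>j\<in>{1..length p}. alt k m * E k (length p) m j * E k (length p) b0 (perm_app p j)))"
      unfolding tm_def by (simp add: sum_distrib_left mult_ac)
    also have "\<dots> = c p * (fact (length p) * (\<Sum>j\<in>{1..length p}. \<Sum>m\<in>{1..k}. alt k m * E k (length p) m j * E k (length p) b0 (perm_app p j)))"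
      by (subst sum.swap) simp
    also have "\<dots> = G p" unfolding G_def by (simp add: sum_distrib_right)
    finally show ?thesis .
  qed
  have "(\<Sum>m\<in>{1..k}. alt k m * Mx S c k m b0) = (\<Sum>m\<in>{1..k}. \<Sum>p\<in>S. alt k m * tm c p k m b0)"
    unfolding Mx_tm by (simp add: sum_distrib_left)
  also have "\<dots> = (\<Sum>p\<in>S. \<Sum>m\<in>{1..k}. alt k m * tm c p k m b0)"
    by (rule sum.swap)
  also have "\<dots> = (\<Sum>p\<in>S. G p)" by (rule sum.cong[OF refl]) (rule per)
  finally have LG: "(\<Sum>p\<in>S. G p) = 0" using L by simp
  have G0: "G p = 0" if "p \<in> S" "p \<noteq> p0" for p
  proof -
    have "length p < k" "1 \<le> length p" using lt perms that by auto
    then have "\<forall>j\<in>{1..length p}. (\<Sum>m\<in>{1..k}. alt k m * E k (length p) m j) = 0" using alt_E by auto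
    then show ?thesis unfolding G_def by simp
  qed
  have "(\<Sum>p\<in>S. G p) = G p0 + (\<Sum>p\<in>S - {p0}. G p)" using fin p0(1) by (rule sum.remove)
  also have "(\<Sum>p\<in>S - {p0}. G p) = 0" using G0 by (intro sum.neutral) auto
  finally have Gp0: "G p0 = 0" using LG by simp
  have inner: "(\<Sum>m\<in>{1..k}. alt k m * E k k m j) = alt k j" if "j \<in> {1..k}" for j
  proof -
    have "(\<Sum>m\<in>{1..k}. alt k m * E k k m j) = (\<Sum>m\<in>{1..k}. if m = j then alt k m else 0)"
      using that E_same[of j k] by (intro sum.cong) auto
    also have "\<dots> = alt k j" using that by (simp add: sum.delta')
    finally show ?thesis .
  qed
  have outer: "(\<Sum>j\<in>{1..k}. alt k j * E k k b0 (perm_app p0 j)) = alt k 1"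
  proof -
    have "(\<Sum>j\<in>{1..k}. alt k j * E k k b0 (perm_app p0 j)) = (\<Sum>j\<in>{1..k}. if j = 1 then alt k j else 0)"
    proof (rule sum.cong[OF refl])
      fix j assume j: "j \<in> {1..k}"
      have pj: "perm_app p0 j \<in> {1..k}" using perm_app_in[OF ip0] j p0(2) by auto
      have "b0 = perm_app p0 j \<longleftrightarrow> j = 1"
        using inj_onD[OF perm_app_inj[OF ip0], of 1 j] j k p0(2) unfolding b0_def by auto
      then show "alt k j * E k k b0 (perm_app p0 j) = (if j = 1 then alt k j else 0)"
        using E_same[of "perm_app p0 j" k b0] pj by auto
    qed
    also have "\<dots> = alt k 1" using k by (simp add: sum.delta')
    finally show ?thesis .
  qed
  have "(\<Sum>j\<in>{1..k}. (\<Sum>m\<in>{1..k}. alt k m * E k k m j) * E k k b0 (perm_app p0 j))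
      = (\<Sum>j\<in>{1..k}. alt k j * E k k b0 (perm_app p0 j))"
  proof (rule sum.cong[OF refl])
    fix j assume j: "j \<in> {1..k}"
    show "(\<Sum>m\<in>{1..k}. alt k m * E k k m j) * E k k b0 (perm_app p0 j) = alt k j * E k k b0 (perm_app p0 j)"
      unfolding inner[OF j] ..
  qed
  then have "G p0 = c p0 * (fact k * alt k 1)"
    unfolding G_def p0(2) outer by simp
  then have "c p0 * (fact k * (1 / fact (k-1))) = 0" using Gp0 alt1 by simp
  then show ?thesis by simp
qed

theorem lemma13:
  fixes p1 p2 p3 :: "nat list"
  assumes "nontrivial_perm p1" and "nontrivial_perm p2" and "nontrivial_perm p3"
    and "p1 \<noteq> p2" and "p1 \<noteq> p3" and "p2 \<noteq> p3"
    and "lin_dependent_perms {p1, p2, p3}"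
    and "perm_order p1 \<ge> perm_order p2" and "perm_order p2 \<ge> perm_order p3"
    and "perm_order p1 > 3"
  shows "perm_order p2 = 2 \<and> perm_order p3 = 2"
proof -
  have ip: "is_perm p1" "is_perm p2" "is_perm p3" using assms(1-3) unfolding nontrivial_perm_def by auto
  have l2: "length p1 \<ge> 2" "length p2 \<ge> 2" "length p3 \<ge> 2"
    using assms(1-3) unfolding nontrivial_perm_def perm_order_def by auto
  have ord: "length p2 \<le> length p1" "length p3 \<le> length p2" "length p1 \<ge> 4"
    using assms(8-10) unfolding perm_order_def by auto
  note ne = assms(4-6)
  obtain c where nz: "\<exists>p\<in>{p1, p2, p3}. c p \<noteq> 0"
    and D: "\<forall>\<alpha> \<beta>. 0 < \<alpha> \<and> \<alpha> < 1 \<and> 0 < \<beta> \<and> \<beta> < 1 \<longrightarrow> (\<Sum>p\<in>{p1, p2, p3}. c p * grad_poly p \<alpha> \<beta>) = 0"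
    using assms(7) unfolding lin_dependent_perms_def by blast
  define S where "S = {p1, p2, p3}"
  have finS: "finite S" unfolding S_def by simp
  have permsS: "\<forall>p\<in>S. is_perm p \<and> 1 \<le> length p" unfolding S_def using ip l2 by auto
  define C0 where "C0 = HS S c (1/2) (1/2)"
  have H: "HS S c x y = C0" if "0 < x" "x < 1" "0 < y" "y < 1" for x y
    unfolding C0_def by (rule H_const[OF finS permsS _ that]) (use D in \<open>auto simp: S_def\<close>)
  have nz': "c p1 \<noteq> 0 \<or> c p2 \<noteq> 0 \<or> c p3 \<noteq> 0" using nz by auto
  have main: "length p2 = 2 \<and> length p3 = 2"
  proof (cases "length p2 < length p1")
    case True
    have M1: "Mx S c (length p1) m b = C0 * fact (length p1 - 1) * fact (length p1 - 1)"
      if "m \<in> {1..length p1}" "b \<in> {1..length p1}" for m b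
      by (rule M_const[OF finS _ _ H that]) (use permsS ord in \<open>auto simp: S_def\<close>)
    have c1: "c p1 = 0"
      by (rule top_zero[OF finS _ _ _ _ _ M1]) (use permsS ord True ne in \<open>auto simp: S_def\<close>)
    define S' where "S' = {p2, p3}"
    have SS': "S = insert p1 S'" "p1 \<notin> S'" "finite S'" unfolding S_def S'_def using ne by auto
    have H': "HS S' c x y = C0" if "0 < x" "x < 1" "0 < y" "y < 1" for x y
      using H[OF that] HS_drop[OF SS'(3) SS'(2), of c x y] c1 SS'(1) by simp
    show ?thesis
    proof (cases "length p3 < length p2")
      case True2: True
      have M2: "Mx S' c (length p2) m b = C0 * fact (length p2 - 1) * fact (length p2 - 1)"
        if "m \<in> {1..length p2}" "b \<in> {1..length p2}" for m b
        by (rule M_const[OF SS'(3) _ _ H' that]) (use ip l2 ord in \<open>auto simp: S'_def\<close>)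
      have c2: "c p2 = 0"
        by (rule top_zero[OF SS'(3) _ _ _ _ _ M2]) (use ip l2 ord True2 ne in \<open>auto simp: S'_def\<close>)
      have H'': "HS {p3} c x y = C0" if "0 < x" "x < 1" "0 < y" "y < 1" for x y
        using H'[OF that] HS_drop[of "{p3}" p2 c x y] c2 ne unfolding S'_def by simp
      have M3: "Mx {p3} c (length p3) m b = C0 * fact (length p3 - 1) * fact (length p3 - 1)"
        if "m \<in> {1..length p3}" "b \<in> {1..length p3}" for m b
        by (rule M_const[OF _ _ _ H'' that]) (use ip l2 in auto)
      have m1: "1 \<in> {1..length p3}" using l2 by simp
      have one: "(c p3 * fact (length p3)) * (if perm_app p3 1 = b then 1 else 0) = C0 * fact (length p3 - 1) * fact (length p3 - 1)"
        if "b \<in> {1..length p3}" for b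
        using M3[OF m1 that] Mx1[of p3 c "length p3" 1 b] tm_same[OF ip(3) refl m1 that, of c] by simp
      obtain b2 where b2: "b2 \<in> {1..length p3}" "b2 \<notin> {perm_app p3 1}"
        using avoid[of "{perm_app p3 1}" "length p3"] l2 by auto
      have pa: "perm_app p3 1 \<in> {1..length p3}" using perm_app_in[OF ip(3) m1] .
      have "C0 * fact (length p3 - 1) * fact (length p3 - 1) = 0" using one[OF b2(1)] b2(2) by simp
      then have "c p3 * fact (length p3) = 0" using one[OF pa] by simp
      then have "c p3 = 0" by simp
      then show ?thesis using c1 c2 nz' by simp
    next
      case False2: False
      then have eq: "length p3 = length p2" using ord by simp
      have M2: "Mx S' c (length p2) m b = C0 * fact (length p2 - 1) * fact (length p2 - 1)"
        if "m \<in> {1..length p2}" "b \<in> {1..length p2}" for m b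
        by (rule M_const[OF SS'(3) _ _ H' that]) (use ip l2 ord eq in \<open>auto simp: S'_def\<close>)
      have "length p2 \<le> 2"
      proof (rule ccontr)
        assume "\<not> length p2 \<le> 2"
        then have k3: "length p2 \<ge> 3" by simp
        have "c p2 * fact (length p2) = 0 \<and> c p3 * fact (length p2) = 0"
        proof (rule pair_lemma[OF ip(2) ip(3) refl eq k3 ne(3)])
          fix m b assume mb: "m \<in> {1..length p2}" "b \<in> {1..length p2}"
          show "c p2 * fact (length p2) * (if perm_app p2 m = b then 1 else 0) + c p3 * fact (length p2) * (if perm_app p3 m = b then 1 else 0) = C0 * fact (length p2 - 1) * fact (length p2 - 1)"
            using M2[OF mb] Mx2[OF ne(3), of c "length p2" m b] tm_same[OF ip(2) refl mb, of c] tm_same[OF ip(3) eq mb, of c]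
            unfolding S'_def by simp
        qed
        then have "c p2 = 0" "c p3 = 0" by auto
        then show False using c1 nz' by simp
      qed
      then show ?thesis using l2 eq by simp
    qed
  next
    case False
    then have k12: "length p1 = length p2" using ord by simp
    define k where "k = length p1"
    have lk1: "length p1 = k" and lk2: "length p2 = k" using k12 unfolding k_def by auto
    have M: "Mx S c k m b = C0 * fact (k-1) * fact (k-1)" if "m \<in> {1..k}" "b \<in> {1..k}" for m b
      by (rule M_const[OF finS _ _ H that]) (use permsS ord k12 in \<open>auto simp: S_def k_def\<close>)
    have MS: "Mx S c k m b = tm c p1 k m b + tm c p2 k m b + tm c p3 k m b" for m b
      unfolding S_def by (rule Mx3[OF ne])
    show ?thesis
    proof (cases "length p3 < length p2")
      case True
      define k' where "k' = length p3"
      have lk3: "length p3 = k'" unfolding k'_def ..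
      have kk: "4 \<le> k" "2 \<le> k'" "k' < k" using ord l2 True k12 unfolding k_def k'_def by auto
      have c3: "c p3 \<noteq> 0"
      proof
        assume c3: "c p3 = 0"
        have tm3: "tm c p3 k m b = 0" for m b unfolding tm_def c3 by simp
        have "c p1 * fact k = 0 \<and> c p2 * fact k = 0"
        proof (rule pair_lemma[OF ip(1) ip(2) lk1 lk2 _ ne(1)])
          show "3 \<le> k" using kk by simp
          fix m b assume mb: "m \<in> {1..k}" "b \<in> {1..k}"
          show "c p1 * fact k * (if perm_app p1 m = b then 1 else 0) + c p2 * fact k * (if perm_app p2 m = b then 1 else 0) = C0 * fact (k-1) * fact (k-1)"
            using M[OF mb] MS[of m b] tm3[of m b] tm_same[OF ip(1) lk1 mb, of c] tm_same[OF ip(2) lk2 mb, of c] by simp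
        qed
        then show False using c3 nz' by simp
      qed
      define \<gamma> where "\<gamma> = c p3 * fact k' * (fact (k-1) / fact (k'-1))"
      have \<gamma>: "\<gamma> \<noteq> 0" using c3 unfolding \<gamma>_def by simp
      have k1: "1 \<le> k'" "k' \<le> k" using kk by auto
      have m1: "1 \<in> {1..k}" and mk: "k \<in> {1..k}" and m2: "2 \<in> {1..k}" using kk by auto
      have z1: "1 \<le> perm_app p3 1" "perm_app p3 1 \<le> k'" using perm_app_in[OF ip(3), of 1] kk unfolding k'_def by auto
      have zk: "1 \<le> perm_app p3 k'" "perm_app p3 k' \<le> k'" using perm_app_in[OF ip(3), of k'] kk unfolding k'_def by auto
      have R1: "(C0 * fact (k-1) * fact (k-1) = 0 \<and> k = k' + 1) \<or> (C0 * fact (k-1) * fact (k-1) \<noteq> 0 \<and> k = 4 \<and> k' = 3 \<and> perm_app p3 1 = 2)"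
      proof (rule RL[OF kk z1 \<gamma>])
        fix b assume b: "b \<in> {1..k}"
        show "c p1 * fact k * (if perm_app p1 1 = b then 1 else 0) + c p2 * fact k * (if perm_app p2 1 = b then 1 else 0) + \<gamma> * E k k' b (perm_app p3 1) = C0 * fact (k-1) * fact (k-1)"
          using M[OF m1 b] MS[of 1 b] tm_same[OF ip(1) lk1 m1 b, of c] tm_same[OF ip(2) lk2 m1 b, of c]
            tm_row1[OF ip(3) lk3 k1, of c b] unfolding \<gamma>_def by simp
      qed
      have Rk: "(C0 * fact (k-1) * fact (k-1) = 0 \<and> k = k' + 1) \<or> (C0 * fact (k-1) * fact (k-1) \<noteq> 0 \<and> k = 4 \<and> k' = 3 \<and> perm_app p3 k' = 2)"
      proof (rule RL[OF kk zk \<gamma>])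
        fix b assume b: "b \<in> {1..k}"
        show "c p1 * fact k * (if perm_app p1 k = b then 1 else 0) + c p2 * fact k * (if perm_app p2 k = b then 1 else 0) + \<gamma> * E k k' b (perm_app p3 k') = C0 * fact (k-1) * fact (k-1)"
          using M[OF mk b] MS[of k b] tm_same[OF ip(1) lk1 mk b, of c] tm_same[OF ip(2) lk2 mk b, of c]
            tm_rowk[OF ip(3) lk3 k1, of c b] unfolding \<gamma>_def by simp
      qed
      show ?thesis
      proof (cases "C0 * fact (k-1) * fact (k-1) = 0")
        case False
        then have "perm_app p3 1 = 2" "perm_app p3 k' = 2" using R1 Rk by auto
        then have "1 = k'" using inj_onD[OF perm_app_inj[OF ip(3)], of 1 k'] kk unfolding k'_def by auto
        then show ?thesis using kk by simp
      next
        case True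
        then have kk1: "k = k' + 1" using R1 by auto
        have z2: "1 \<le> perm_app p3 2" "perm_app p3 2 \<le> k'" using perm_app_in[OF ip(3), of 2] kk unfolding k'_def by auto
        have zne: "perm_app p3 1 \<noteq> perm_app p3 2"
          using inj_onD[OF perm_app_inj[OF ip(3)], of 1 2] kk unfolding k'_def by auto
        have False
        proof (rule RL2[where \<gamma>="c p3 * fact k'", OF kk1 kk(1) z1 z2 zne])
          show "c p3 * fact k' \<noteq> 0" using c3 by simp
          fix b assume b: "b \<in> {1..k}"
          show "c p1 * fact k * (if perm_app p1 2 = b then 1 else 0) + c p2 * fact k * (if perm_app p2 2 = b then 1 else 0) + (c p3 * fact k') * (E k k' b (perm_app p3 1) + real (k-2) * E k k' b (perm_app p3 2)) = 0"
            using M[OF m2 b] MS[of 2 b] tm_same[OF ip(1) lk1 m2 b, of c] tm_same[OF ip(2) lk2 m2 b, of c]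
              tm_row2[OF ip(3) lk3 kk1 kk(2), of c b] True by simp
        qed
        then show ?thesis ..
      qed
    next
      case False
      then have lk3: "length p3 = k" using ord lk2 by simp
      have kk: "4 \<le> k" using ord unfolding k_def by simp
      have "c p1 * fact k = 0 \<and> c p2 * fact k = 0 \<and> c p3 * fact k = 0"
      proof (rule triple_lemma[OF ip lk1 lk2 lk3 kk ne])
        fix m b assume mb: "m \<in> {1..k}" "b \<in> {1..k}"
        show "c p1 * fact k * (if perm_app p1 m = b then 1 else 0) + c p2 * fact k * (if perm_app p2 m = b then 1 else 0)
          + c p3 * fact k * (if perm_app p3 m = b then 1 else 0) = C0 * fact (k-1) * fact (k-1)"
          using M[OF mb] MS[of m b] tm_same[OF ip(1) lk1 mb, of c] tm_same[OF ip(2) lk2 mb, of c]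
            tm_same[OF ip(3) lk3 mb, of c] by simp
      qed
      then show ?thesis using nz' by simp
    qed
  qed
  then show ?thesis unfolding perm_order_def .
qed

end
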